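(* Let $G\le S_n$ be transitive and suppose $G$ contains two permutations $g_1,g_2$ whose i-types are disjoint. Then $G$ is primitive.
   Context: If $(m_1,\dots,m_l)$ is a partition of $m$, then $(km_1,\dots,km_l)$ is an ic-partition of type $(k,m)$. A clustering of a partition is a partition of its multiset of parts into sub-multisets (clusters). A partition of $km$ is an i-partition of type $(k,m)$ if it has a clustering $P_1,\dots,P_r$ and a partition $(k_1,\dots,k_r)$ of $k$ with each $P_i$ an ic-partition of type $(k_i,m)$. The i-type of a permutation $g\in S_n$ is the set of pairs $(k,m)$ with $k,m>1$, $km=n$, such that the cycle partition of $g$ (multiset of its cycle lengths) is an i-partition of type $(k,m)$. *)

theory Defs
  imports "HOL-Algebra.Sym_Groups" "HOL-Combinatorics.Orbits" "HOL-Library.Multiset"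
begin

definition is_partition :: "nat multiset \<Rightarrow> nat \<Rightarrow> bool" where
  "is_partition P m \<longleftrightarrow> 0 \<notin># P \<and> sum_mset P = m"

definition ic_partition :: "nat multiset \<Rightarrow> nat \<Rightarrow> nat \<Rightarrow> bool" where
  "ic_partition P k m \<longleftrightarrow> (\<exists>Q. is_partition Q m \<and> P = image_mset (\<lambda>x. k * x) Q)"

text \<open>i-partition of type (k,m): a partition P of k*m admitting a clustering P_1,...,P_r
  (nonempty sub-multisets whose multiset sum is P) and a partition (k_1,...,k_r) of k with each
  P_i an ic-partition of type (k_i,m). The pairs (k_i,P_i) are collected in the multiset C.\<close>
definition i_partition :: "nat multiset \<Rightarrow> nat \<Rightarrow> nat \<Rightarrow> bool" where
  "i_partition P k m \<longleftrightarrow> is_partition P (k * m) \<and>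
     (\<exists>C :: (nat \<times> nat multiset) multiset.
        (\<forall>c \<in># C. snd c \<noteq> {#}) \<and>
        sum_mset (image_mset snd C) = P \<and>
        is_partition (image_mset fst C) k \<and>
        (\<forall>c \<in># C. ic_partition (snd c) (fst c) m))"

text \<open>Cycle partition of g \<in> S_n (acting on {1..n}): multiset of the lengths of its cycles
  (including fixed points as cycles of length 1).\<close>
definition cycle_partition :: "nat \<Rightarrow> (nat \<Rightarrow> nat) \<Rightarrow> nat multiset" where
  "cycle_partition n g = image_mset card (mset_set {Orbits.orbit g x | x. x \<in> {1..n}})"

definition i_type :: "nat \<Rightarrow> (nat \<Rightarrow> nat) \<Rightarrow> (nat \<times> nat) set" where
  "i_type n g = {(k, m). k > 1 \<and> m > 1 \<and> k * m = n \<and> i_partition (cycle_partition n g) k m}"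

definition transitive_perm_group :: "nat \<Rightarrow> (nat \<Rightarrow> nat) set \<Rightarrow> bool" where
  "transitive_perm_group n G \<longleftrightarrow> (\<forall>x\<in>{1..n}. \<forall>y\<in>{1..n}. \<exists>g\<in>G. g x = y)"

definition is_block :: "nat \<Rightarrow> (nat \<Rightarrow> nat) set \<Rightarrow> nat set \<Rightarrow> bool" where
  "is_block n G B \<longleftrightarrow> B \<noteq> {} \<and> B \<subseteq> {1..n} \<and> (\<forall>g\<in>G. g ` B = B \<or> g ` B \<inter> B = {})"

definition primitive_perm_group :: "nat \<Rightarrow> (nat \<Rightarrow> nat) set \<Rightarrow> bool" where
  "primitive_perm_group n G \<longleftrightarrow> transitive_perm_group n G \<and>
     (\<forall>B. is_block n G B \<longrightarrow> card B = 1 \<or> B = {1..n})"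

end

theory Submission
  imports Defs
begin


lemma orb_perm:
  assumes "finite S" "f ` S \<subseteq> S" "inj_on f S" "x \<in> S"
  shows "x \<in> orbit f x"
proof -
  define h where "h = (\<lambda>y. if y \<in> S then f y else y)"
  have "h ` S = f ` S" unfolding h_def by auto
  also have "\<dots> = S" using endo_inj_surj assms by blast
  finally have im: "h ` S = S" .
  have "inj_on h S" using assms(3) unfolding h_def inj_on_def by auto
  hence "bij_betw h S S" using im by (simp add: bij_betw_def)
  hence "h permutes S" by (rule bij_imp_permutes) (simp add: h_def)
  hence "permutation h" using assms(1) permutation_permutes by blast
  hence "x \<in> orbit h x" by (rule permutation_self_in_orbit)
  moreover have "orbit h x = orbit f x"
    by (rule orbit_cong0[OF assms(4)]) (use assms(2) in \<open>auto simp: h_def\<close>)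
  ultimately show ?thesis by simp
qed

lemma orb_sub:
  assumes "f ` S \<subseteq> S" "x \<in> S"
  shows "orbit f x \<subseteq> S"
proof
  fix y assume "y \<in> orbit f x" then show "y \<in> S"
  proof induct
    case base show ?case using assms by blast
  next
    case (step y) thus ?case using assms by blast
  qed
qed

lemma orb_eq:
  assumes "finite S" "f ` S \<subseteq> S" "inj_on f S" "x \<in> S" "y \<in> orbit f x"
  shows "orbit f y = orbit f x"
proof -
  have x: "x \<in> orbit f x" by (rule orb_perm[OF assms(1-4)])
  have "x \<in> orbit f y" by (rule orbit_swap[OF x assms(5)])
  show ?thesis
  proof
    show "orbit f y \<subseteq> orbit f x" using orbit_trans[OF _ assms(5)] by auto
    show "orbit f x \<subseteq> orbit f y" using orbit_trans[OF _ \<open>x \<in> orbit f y\<close>] by auto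
  qed
qed

lemma orb_card:
  assumes "x \<in> orbit f x"
  shows "card (orbit f x) = funpow_dist1 f x x"
proof -
  have "orbit f x = (\<lambda>n. (f ^^ n) x) ` {0..<funpow_dist1 f x x}"
    by (rule orbit_conv_funpow_dist1[OF assms])
  moreover have "inj_on (\<lambda>n. (f ^^ n) x) {0..<funpow_dist1 f x x}"
    by (rule inj_on_funpow_dist1[OF assms])
  ultimately show ?thesis by (simp add: card_image)
qed

lemma orb_ret:
  assumes "x \<in> orbit f x"
  shows "(f ^^ card (orbit f x)) x = x" "card (orbit f x) > 0"
  using orb_card[OF assms] funpow_dist1_prop[OF assms] by auto

lemma orb_dvd:
  assumes "x \<in> orbit f x" "(f ^^ q) x = x" "q > 0"
  shows "card (orbit f x) dvd q"
proof -
  let ?p = "funpow_dist1 f x x"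
  have p: "(f ^^ ?p) x = x" by (rule funpow_dist1_prop[OF assms(1)])
  have "(f ^^ (q mod ?p)) x = (f ^^ q) x" by (rule funpow_mod_eq[OF p])
  hence m: "(f ^^ (q mod ?p)) x = x" using assms(2) by simp
  have "q mod ?p = 0"
  proof (rule ccontr)
    assume "q mod ?p \<noteq> 0"
    hence "(f ^^ (q mod ?p)) x \<noteq> x" by (intro funpow_dist1_least) auto
    with m show False by simp
  qed
  thus ?thesis using orb_card[OF assms(1)] by auto
qed

lemma mset_set_UN_disj:
  assumes "finite I" "\<And>i. i \<in> I \<Longrightarrow> finite (A i)"
    "\<And>i j. i \<in> I \<Longrightarrow> j \<in> I \<Longrightarrow> i \<noteq> j \<Longrightarrow> A i \<inter> A j = {}"
  shows "mset_set (\<Union>i\<in>I. A i) = sum_mset (image_mset (\<lambda>i. mset_set (A i)) (mset_set I))"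
  using assms
proof (induction I rule: finite_induct)
  case (insert a I)
  have "mset_set (\<Union>i\<in>insert a I. A i) = mset_set (A a \<union> (\<Union>i\<in>I. A i))" by simp
  also have "\<dots> = mset_set (A a) + mset_set (\<Union>i\<in>I. A i)"
    using insert by (intro mset_set_Union) auto
  finally show ?case using insert by simp
qed simp

lemma image_mset_sum_mset:
  "image_mset f (sum_mset (image_mset h M)) = sum_mset (image_mset (\<lambda>i. image_mset f (h i)) M)"
  by (induction M) auto



lemma funpow_image: fixes g :: "'a \<Rightarrow> 'a" shows "((\<lambda>X. g ` X) ^^ q) X = (g ^^ q) ` X"
proof (induction q)
  case 0 show ?case by (simp add: funpow_0 image_id)
next
  case (Suc q)
  have "((\<lambda>X. g ` X) ^^ Suc q) X = g ` (((\<lambda>X. g ` X) ^^ q) X)" by simp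
  also have "\<dots> = g ` ((g ^^ q) ` X)" using Suc by simp
  also have "\<dots> = (g ^^ Suc q) ` X" by (simp add: image_comp)
  finally show ?case .
qed

lemma core:
  fixes g :: "nat \<Rightarrow> nat" and Bs :: "nat set set"
  assumes gp: "g permutes {1..n}"
    and finBs: "finite Bs" and cov: "\<Union>Bs = {1..n}"
    and cardB: "\<And>X. X \<in> Bs \<Longrightarrow> card X = m" and m0: "m > 0"
    and disj: "\<And>X Y. X \<in> Bs \<Longrightarrow> Y \<in> Bs \<Longrightarrow> X \<inter> Y \<noteq> {} \<Longrightarrow> X = Y"
    and inv: "\<And>X. X \<in> Bs \<Longrightarrow> g ` X \<in> Bs"
    and nkm: "n = k * m" and kB: "card Bs = k"
  shows "i_partition (cycle_partition n g) k m"
proof -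
  define F where "F = (\<lambda>X::nat set. g ` X)"
  have injg: "inj g" using gp permutes_inj by blast
  have FS: "F ` Bs \<subseteq> Bs" using inv F_def by auto
  have Finj: "inj_on F Bs" unfolding F_def inj_on_def using injg by (auto simp: inj_image_eq_iff)
  have gS: "g ` {1..n} \<subseteq> {1..n}" using permutes_image[OF gp] by simp
  have ginj: "inj_on g {1..n}" by (meson injg inj_on_subset subset_UNIV)
  have finS: "finite {1..n}" by simp
  have Xsub: "\<And>X. X \<in> Bs \<Longrightarrow> X \<subseteq> {1..n}" using cov by blast
  have Xfin: "\<And>X. X \<in> Bs \<Longrightarrow> finite X" by (rule finite_subset[OF Xsub finS])
  have Xne: "\<And>X. X \<in> Bs \<Longrightarrow> X \<noteq> {}" proof - fix X assume "X \<in> Bs" thus "X \<noteq> {}" using cardB[of X] m0 by auto qed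
  define Orbs where "Orbs = {orbit g x | x. x \<in> {1..n}}"
  define BOrbs where "BOrbs = {orbit F X | X. X \<in> Bs}"
  define Cyc where "Cyc = (\<lambda>Ob. {orbit g x | x. x \<in> \<Union>Ob})"
  have gx: "\<And>x. x \<in> {1..n} \<Longrightarrow> x \<in> orbit g x" by (rule orb_perm[OF finS gS ginj])
  have gsub: "\<And>x. x \<in> {1..n} \<Longrightarrow> orbit g x \<subseteq> {1..n}" by (rule orb_sub[OF gS])
  have geq: "\<And>x y. x \<in> {1..n} \<Longrightarrow> y \<in> orbit g x \<Longrightarrow> orbit g y = orbit g x"
    by (rule orb_eq[OF finS gS ginj])
  have gcard: "\<And>x. x \<in> {1..n} \<Longrightarrow> card (orbit g x) > 0" by (rule orb_ret(2)[OF gx])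
  have gfin: "\<And>x. x \<in> {1..n} \<Longrightarrow> finite (orbit g x)" by (rule card_ge_0_finite[OF gcard])
  have FX: "\<And>X. X \<in> Bs \<Longrightarrow> X \<in> orbit F X" by (rule orb_perm[OF finBs FS Finj])
  have Fsub: "\<And>X. X \<in> Bs \<Longrightarrow> orbit F X \<subseteq> Bs" by (rule orb_sub[OF FS])
  have Feq: "\<And>X Y. X \<in> Bs \<Longrightarrow> Y \<in> orbit F X \<Longrightarrow> orbit F Y = orbit F X"
    by (rule orb_eq[OF finBs FS Finj])
  have Fcard: "\<And>X. X \<in> Bs \<Longrightarrow> card (orbit F X) > 0" by (rule orb_ret(2)[OF FX])
  have Ofin: "\<And>Ob. Ob \<in> BOrbs \<Longrightarrow> finite Ob \<and> card Ob > 0 \<and> Ob \<subseteq> Bs \<and> Ob \<noteq> {}"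
  proof -
    fix Ob assume "Ob \<in> BOrbs"
    then obtain X where X: "X \<in> Bs" "Ob = orbit F X" unfolding BOrbs_def by blast
    have c: "card Ob > 0" using Fcard[OF X(1)] X(2) by simp
    thus "finite Ob \<and> card Ob > 0 \<and> Ob \<subseteq> Bs \<and> Ob \<noteq> {}"
      using card_ge_0_finite[OF c] Fsub[OF X(1)] X(2) by auto
  qed
  have Ueq: "\<And>Ob Y. Ob \<in> BOrbs \<Longrightarrow> Y \<in> Ob \<Longrightarrow> Ob = orbit F Y"
  proof -
    fix Ob Y assume "Ob \<in> BOrbs" "Y \<in> Ob"
    then obtain X where X: "X \<in> Bs" "Ob = orbit F X" unfolding BOrbs_def by blast
    show "Ob = orbit F Y" using Feq[OF X(1)] \<open>Y \<in> Ob\<close> X(2) by simp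
  qed
  have Ocl: "\<And>Ob Y. Ob \<in> BOrbs \<Longrightarrow> Y \<in> Ob \<Longrightarrow> g ` Y \<in> Ob"
  proof -
    fix Ob Y assume "Ob \<in> BOrbs" "Y \<in> Ob"
    hence "Ob = orbit F Y" by (rule Ueq)
    hence "F Y \<in> Ob" by (simp add: orbit.base)
    thus "g ` Y \<in> Ob" by (simp add: F_def)
  qed
  have Usub: "\<And>Ob. Ob \<in> BOrbs \<Longrightarrow> \<Union>Ob \<subseteq> {1..n}"
  proof - fix Ob assume "Ob \<in> BOrbs" hence "Ob \<subseteq> Bs" using Ofin by simp thus "\<Union>Ob \<subseteq> {1..n}" using cov by auto qed
  have Ufin: "\<And>Ob. Ob \<in> BOrbs \<Longrightarrow> finite (\<Union>Ob)"
  proof - fix Ob assume "Ob \<in> BOrbs" hence "Ob \<subseteq> Bs" "finite Ob" using Ofin by simp_all thus "finite (\<Union>Ob)" using Xfin by (intro finite_Union) auto qed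
  have ginvU: "\<And>Ob x. Ob \<in> BOrbs \<Longrightarrow> x \<in> \<Union>Ob \<Longrightarrow> orbit g x \<subseteq> \<Union>Ob"
  proof -
    fix Ob x assume Ob: "Ob \<in> BOrbs" and x: "x \<in> \<Union>Ob"
    have "g ` \<Union>Ob \<subseteq> \<Union>Ob" using Ocl[OF Ob] by auto
    thus "orbit g x \<subseteq> \<Union>Ob" by (rule orb_sub[OF _ x])
  qed
  have Udisj: "\<And>O1 O2. O1 \<in> BOrbs \<Longrightarrow> O2 \<in> BOrbs \<Longrightarrow> O1 \<noteq> O2 \<Longrightarrow> \<Union>O1 \<inter> \<Union>O2 = {}"
  proof (rule ccontr)
    fix O1 O2 assume Ob: "O1 \<in> BOrbs" "O2 \<in> BOrbs" "O1 \<noteq> O2" "\<Union>O1 \<inter> \<Union>O2 \<noteq> {}"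
    then obtain z Y1 Y2 where z: "z \<in> Y1" "Y1 \<in> O1" "z \<in> Y2" "Y2 \<in> O2" by blast
    hence "Y1 = Y2" using disj Ofin Ob by blast
    thus False using Ueq Ob z by metis
  qed
  have Cycdisj: "\<And>O1 O2. O1 \<in> BOrbs \<Longrightarrow> O2 \<in> BOrbs \<Longrightarrow> O1 \<noteq> O2 \<Longrightarrow> Cyc O1 \<inter> Cyc O2 = {}"
  proof (rule ccontr)
    fix O1 O2 assume Ob: "O1 \<in> BOrbs" "O2 \<in> BOrbs" "O1 \<noteq> O2" "Cyc O1 \<inter> Cyc O2 \<noteq> {}"
    then obtain x y where xy: "x \<in> \<Union>O1" "y \<in> \<Union>O2" "orbit g x = orbit g y"
      unfolding Cyc_def by blast
    have "x \<in> orbit g x" using gx Usub Ob xy by blast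
    hence "x \<in> \<Union>O2" using ginvU[OF Ob(2) xy(2)] xy(3) by blast
    thus False using Udisj[OF Ob(1-3)] xy(1) by blast
  qed
  have Cycfin: "\<And>Ob. Ob \<in> BOrbs \<Longrightarrow> finite (Cyc Ob)"
  proof -
    fix Ob assume "Ob \<in> BOrbs"
    have "Cyc Ob = orbit g ` \<Union>Ob" unfolding Cyc_def by blast
    thus "finite (Cyc Ob)" using Ufin \<open>Ob \<in> BOrbs\<close> by simp
  qed
  have UCyc: "\<And>Ob. Ob \<in> BOrbs \<Longrightarrow> \<Union>(Cyc Ob) = \<Union>Ob"
  proof -
    fix Ob assume Ob: "Ob \<in> BOrbs"
    show "\<Union>(Cyc Ob) = \<Union>Ob"
    proof
      show "\<Union>(Cyc Ob) \<subseteq> \<Union>Ob"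
      proof
        fix z assume "z \<in> \<Union>(Cyc Ob)"
        then obtain x where "z \<in> orbit g x" "x \<in> \<Union>Ob" unfolding Cyc_def by auto
        thus "z \<in> \<Union>Ob" using ginvU[OF Ob] by auto
      qed
      show "\<Union>Ob \<subseteq> \<Union>(Cyc Ob)"
      proof
        fix z assume z: "z \<in> \<Union>Ob"
        hence "z \<in> orbit g z" using gx Usub[OF Ob] by auto
        moreover have "orbit g z \<in> Cyc Ob" unfolding Cyc_def using z by auto
        ultimately show "z \<in> \<Union>(Cyc Ob)" by auto
      qed
    qed
  qed
  have orbpair: "\<And>x y z. x \<in> {1..n} \<Longrightarrow> y \<in> {1..n} \<Longrightarrow> z \<in> orbit g x \<Longrightarrow> z \<in> orbit g y
     \<Longrightarrow> orbit g x = orbit g y"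
  proof -
    fix x y z assume a: "x \<in> {1..n}" "y \<in> {1..n}" "z \<in> orbit g x" "z \<in> orbit g y"
    have "orbit g z = orbit g x" by (rule geq[OF a(1) a(3)])
    moreover have "orbit g z = orbit g y" by (rule geq[OF a(2) a(4)])
    ultimately show "orbit g x = orbit g y" by simp
  qed
  have CycPair: "\<And>Ob. Ob \<in> BOrbs \<Longrightarrow> pairwise disjnt (Cyc Ob)"
  proof -
    fix Ob assume Ob: "Ob \<in> BOrbs"
    show "pairwise disjnt (Cyc Ob)"
      unfolding pairwise_def disjnt_def Cyc_def
    proof (intro ballI impI)
      fix a b assume a: "a \<in> {orbit g x |x. x \<in> \<Union> Ob}" and b: "b \<in> {orbit g x |x. x \<in> \<Union> Ob}"
        and ab: "a \<noteq> b"
      from a obtain x where x: "a = orbit g x" "x \<in> \<Union>Ob" by blast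
      from b obtain y where y: "b = orbit g y" "y \<in> \<Union>Ob" by blast
      show "a \<inter> b = {}"
      proof (rule ccontr)
        assume "a \<inter> b \<noteq> {}"
        then obtain z where "z \<in> orbit g x" "z \<in> orbit g y" using x y by auto
        moreover have "x \<in> {1..n}" "y \<in> {1..n}" using x y Usub[OF Ob] by auto
        ultimately have "a = b" using orbpair x y by simp
        thus False using ab by simp
      qed
    qed
  qed
  have cardU: "\<And>Ob. Ob \<in> BOrbs \<Longrightarrow> card (\<Union>Ob) = card Ob * m"
  proof -
    fix Ob assume Ob: "Ob \<in> BOrbs"
    have "pairwise disjnt Ob"
    proof (rule pairwiseI)
      fix Y1 Y2 assume "Y1 \<in> Ob" "Y2 \<in> Ob" "Y1 \<noteq> Y2"
      thus "disjnt Y1 Y2" using disj[of Y1 Y2] Ofin[OF Ob] by (auto simp: disjnt_def)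
    qed
    hence "card (\<Union>Ob) = sum card Ob" by (rule card_Union_disjoint) (use Xfin Ofin[OF Ob] in auto)
    also have "\<dots> = sum (\<lambda>_. m) Ob" using cardB Ofin[OF Ob] by (intro sum.cong) auto
    finally show "card (\<Union>Ob) = card Ob * m" by simp
  qed
  have sumCyc: "\<And>Ob. Ob \<in> BOrbs \<Longrightarrow> sum card (Cyc Ob) = card Ob * m"
  proof -
    fix Ob assume Ob: "Ob \<in> BOrbs"
    have "card (\<Union>(Cyc Ob)) = sum card (Cyc Ob)"
    proof (rule card_Union_disjoint[OF CycPair[OF Ob]])
      fix c assume "c \<in> Cyc Ob"
      hence "c \<subseteq> \<Union>Ob" using UCyc[OF Ob] by auto
      thus "finite c" using Ufin[OF Ob] finite_subset by auto
    qed
    thus "sum card (Cyc Ob) = card Ob * m" using UCyc[OF Ob] cardU[OF Ob] by simp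
  qed
  have dvdCyc: "\<And>Ob c. Ob \<in> BOrbs \<Longrightarrow> c \<in> Cyc Ob \<Longrightarrow> card Ob dvd card c"
  proof -
    fix Ob c assume Ob: "Ob \<in> BOrbs" and c: "c \<in> Cyc Ob"
    then obtain x Y where x: "c = orbit g x" "x \<in> Y" "Y \<in> Ob" unfolding Cyc_def by blast
    have Y: "Y \<in> Bs" using Ofin[OF Ob] x(3) by auto
    have xn: "x \<in> {1..n}" using Xsub[OF Y] x(2) by auto
    define q where "q = card c"
    have q: "(g ^^ q) x = x" "q > 0" using orb_ret[OF gx[OF xn]] x(1) q_def by auto
    have OY: "Ob = orbit F Y" by (rule Ueq[OF Ob x(3)])
    have "(F ^^ q) Y \<in> orbit F Y" by (rule funpow_in_orbit[OF FX[OF Y]])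
    hence inB: "(F ^^ q) Y \<in> Bs" using Fsub[OF Y] by auto
    have "(F ^^ q) Y = (g ^^ q) ` Y" unfolding F_def by (rule funpow_image)
    hence "x \<in> (F ^^ q) Y" using q(1) x(2) by (metis imageI)
    hence "(F ^^ q) Y = Y" using x(2) by (intro disj[OF inB Y]) auto
    hence "card (orbit F Y) dvd q" by (rule orb_dvd[OF FX[OF Y] _ q(2)])
    thus "card Ob dvd card c" using OY q_def by simp
  qed
  have CycSub: "\<And>Ob c. Ob \<in> BOrbs \<Longrightarrow> c \<in> Cyc Ob \<Longrightarrow> finite c \<and> card c > 0"
  proof -
    fix Ob c assume Ob: "Ob \<in> BOrbs" and c: "c \<in> Cyc Ob"
    then obtain x where x: "c = orbit g x" "x \<in> \<Union>Ob" unfolding Cyc_def by auto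
    have "x \<in> {1..n}" using Usub[OF Ob] x(2) by auto
    thus "finite c \<and> card c > 0" using gfin gcard x(1) by auto
  qed
  have finBO: "finite BOrbs"
  proof -
    have "BOrbs = orbit F ` Bs" unfolding BOrbs_def by auto
    thus ?thesis using finBs by simp
  qed
  have BOI: "\<And>X. X \<in> Bs \<Longrightarrow> orbit F X \<in> BOrbs" unfolding BOrbs_def by auto
  have UBO: "\<Union>BOrbs = Bs"
  proof
    show "\<Union>BOrbs \<subseteq> Bs" using Ofin by auto
    show "Bs \<subseteq> \<Union>BOrbs"
    proof
      fix X assume X: "X \<in> Bs"
      show "X \<in> \<Union>BOrbs" using FX[OF X] BOI[OF X] by auto
    qed
  qed
  have Orbs_eq: "(\<Union>Ob\<in>BOrbs. Cyc Ob) = Orbs"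
  proof
    show "(\<Union>Ob\<in>BOrbs. Cyc Ob) \<subseteq> Orbs"
    proof
      fix c assume "c \<in> (\<Union>Ob\<in>BOrbs. Cyc Ob)"
      then obtain Ob x where Ob: "Ob \<in> BOrbs" "c = orbit g x" "x \<in> \<Union>Ob" unfolding Cyc_def by auto
      hence "x \<in> {1..n}" using Usub[OF Ob(1)] by auto
      thus "c \<in> Orbs" unfolding Orbs_def using Ob(2) by auto
    qed
    show "Orbs \<subseteq> (\<Union>Ob\<in>BOrbs. Cyc Ob)"
    proof
      fix c assume "c \<in> Orbs"
      then obtain x where x: "c = orbit g x" "x \<in> {1..n}" unfolding Orbs_def by auto
      have "x \<in> \<Union>Bs" using cov x(2) by simp
      then obtain X where X: "X \<in> Bs" "x \<in> X" by blast
      have "X \<in> orbit F X" by (rule FX[OF X(1)])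
      hence "c \<in> Cyc (orbit F X)" unfolding Cyc_def using x(1) X(2) by auto
      thus "c \<in> (\<Union>Ob\<in>BOrbs. Cyc Ob)" using BOI[OF X(1)] by auto
    qed
  qed
  have finOrbs: "finite Orbs"
  proof -
    have "Orbs = orbit g ` {1..n}" unfolding Orbs_def by auto
    thus ?thesis by simp
  qed
  have OrbsPair: "pairwise disjnt Orbs"
  proof (rule pairwiseI)
    fix a b assume a: "a \<in> Orbs" and b: "b \<in> Orbs" and ab: "a \<noteq> b"
    from a obtain x where x: "a = orbit g x" "x \<in> {1..n}" unfolding Orbs_def by auto
    from b obtain y where y: "b = orbit g y" "y \<in> {1..n}" unfolding Orbs_def by auto
    show "disjnt a b" unfolding disjnt_def
    proof (rule ccontr)
      assume "a \<inter> b \<noteq> {}"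
      then obtain z where "z \<in> orbit g x" "z \<in> orbit g y" using x y by auto
      hence "a = b" using orbpair[OF x(2) y(2)] x y by simp
      thus False using ab by simp
    qed
  qed
  have UOrbs: "\<Union>Orbs = {1..n}"
  proof
    show "\<Union>Orbs \<subseteq> {1..n}" unfolding Orbs_def using gsub by auto
    show "{1..n} \<subseteq> \<Union>Orbs"
    proof
      fix x assume x: "x \<in> {1..n}"
      hence "x \<in> orbit g x" by (rule gx)
      thus "x \<in> \<Union>Orbs" unfolding Orbs_def using x by auto
    qed
  qed
  have BOPair: "pairwise disjnt BOrbs"
  proof (rule pairwiseI)
    fix a b assume a: "a \<in> BOrbs" and b: "b \<in> BOrbs" and ab: "a \<noteq> b"
    show "disjnt a b" unfolding disjnt_def
    proof (rule ccontr)
      assume "a \<inter> b \<noteq> {}"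
      then obtain Y where Y: "Y \<in> a" "Y \<in> b" by auto
      have "a = orbit F Y" "b = orbit F Y" using Ueq[OF a Y(1)] Ueq[OF b Y(2)] by auto
      thus False using ab by simp
    qed
  qed
  define C where "C = image_mset (\<lambda>Ob. (card Ob, image_mset card (mset_set (Cyc Ob)))) (mset_set BOrbs)"
  have memC: "\<And>c. c \<in># C \<Longrightarrow> \<exists>Ob\<in>BOrbs. c = (card Ob, image_mset card (mset_set (Cyc Ob)))"
    unfolding C_def using finBO by auto
  show ?thesis unfolding i_partition_def
  proof (intro conjI exI[of _ C])
    show "is_partition (cycle_partition n g) (k * m)"
      unfolding is_partition_def cycle_partition_def Orbs_def[symmetric]
    proof
      show "0 \<notin># image_mset card (mset_set Orbs)"
      proof
        assume "0 \<in># image_mset card (mset_set Orbs)"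
        then obtain c where c: "c \<in> Orbs" "card c = 0" using finOrbs by auto
        then obtain x where x: "x \<in> {1..n}" "c = orbit g x" unfolding Orbs_def by auto
        have "card (orbit g x) > 0" by (rule gcard[OF x(1)])
        thus False using c(2) x(2) by simp
      qed
      have "sum_mset (image_mset card (mset_set Orbs)) = sum card Orbs"
        by (simp add: sum_unfold_sum_mset)
      also have "\<dots> = card (\<Union>Orbs)"
      proof (rule card_Union_disjoint[OF OrbsPair, symmetric])
        fix c assume "c \<in> Orbs"
        then obtain x where x: "x \<in> {1..n}" "c = orbit g x" unfolding Orbs_def by auto
        show "finite c" using gfin[OF x(1)] x(2) by simp
      qed
      finally show "sum_mset (image_mset card (mset_set Orbs)) = k * m" using UOrbs nkm by simp
    qed
    show "\<forall>c\<in>#C. snd c \<noteq> {#}"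
    proof
      fix c assume "c \<in># C"
      then obtain Ob where Ob: "Ob \<in> BOrbs" "c = (card Ob, image_mset card (mset_set (Cyc Ob)))"
        using memC by blast
      obtain Y where Y: "Y \<in> Ob" using Ofin[OF Ob(1)] by auto
      have "Y \<in> Bs" using Y Ofin[OF Ob(1)] by auto
      then obtain x where "x \<in> Y" using Xne by auto
      hence "orbit g x \<in> Cyc Ob" unfolding Cyc_def using Y by auto
      hence "Cyc Ob \<noteq> {}" by auto
      thus "snd c \<noteq> {#}" using Ob Cycfin[OF Ob(1)] by (simp add: mset_set_empty_iff)
    qed
    show "sum_mset (image_mset snd C) = cycle_partition n g"
    proof -
      have "image_mset snd C = image_mset (\<lambda>Ob. image_mset card (mset_set (Cyc Ob))) (mset_set BOrbs)"
        unfolding C_def by (simp add: image_mset.compositionality comp_def)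
      hence "sum_mset (image_mset snd C) = image_mset card (sum_mset (image_mset (\<lambda>Ob. mset_set (Cyc Ob)) (mset_set BOrbs)))"
        by (simp add: image_mset_sum_mset)
      also have "sum_mset (image_mset (\<lambda>Ob. mset_set (Cyc Ob)) (mset_set BOrbs)) = mset_set (\<Union>Ob\<in>BOrbs. Cyc Ob)"
        by (rule mset_set_UN_disj[symmetric]) (use finBO Cycfin Cycdisj in auto)
      finally show ?thesis unfolding cycle_partition_def Orbs_def[symmetric] Orbs_eq .
    qed
    show "is_partition (image_mset fst C) k"
    proof -
      have im: "image_mset fst C = image_mset card (mset_set BOrbs)"
        unfolding C_def by (simp add: image_mset.compositionality comp_def)
      have "sum card BOrbs = card (\<Union>BOrbs)"
        using card_Union_disjoint[OF BOPair] Ofin by auto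
      hence "sum_mset (image_mset card (mset_set BOrbs)) = k"
        using UBO kB by (simp add: sum_unfold_sum_mset)
      moreover have "0 \<notin># image_mset card (mset_set BOrbs)" using Ofin finBO by auto
      ultimately show ?thesis unfolding is_partition_def im by simp
    qed
    show "\<forall>c\<in>#C. ic_partition (snd c) (fst c) m"
    proof
      fix c assume "c \<in># C"
      then obtain Ob where Ob: "Ob \<in> BOrbs" "c = (card Ob, image_mset card (mset_set (Cyc Ob)))"
        using memC by blast
      define kO where "kO = card Ob"
      have kO: "kO > 0" using Ofin Ob kO_def by blast
      define Q where "Q = image_mset (\<lambda>c. card c div kO) (mset_set (Cyc Ob))"
      have dv: "\<And>c. c \<in> Cyc Ob \<Longrightarrow> kO * (card c div kO) = card c"
        using dvdCyc[OF Ob(1)] kO_def by simp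
      have "is_partition Q m"
        unfolding is_partition_def
      proof
        show "0 \<notin># Q" unfolding Q_def using Cycfin[OF Ob(1)] dv CycSub[OF Ob(1)]
          by (auto, metis mult_0_right less_irrefl)
        have "kO * sum_mset Q = kO * sum (\<lambda>c. card c div kO) (Cyc Ob)"
          unfolding Q_def by (simp add: sum_unfold_sum_mset)
        also have "\<dots> = sum (\<lambda>c. kO * (card c div kO)) (Cyc Ob)" by (simp add: sum_distrib_left)
        also have "\<dots> = sum card (Cyc Ob)" using dv by (intro sum.cong) auto
        also have "\<dots> = kO * m" using sumCyc[OF Ob(1)] kO_def by simp
        finally show "sum_mset Q = m" using kO by simp
      qed
      moreover have "image_mset card (mset_set (Cyc Ob)) = image_mset ((*) kO) Q"
        unfolding Q_def image_mset.compositionality comp_def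
        using dv Cycfin[OF Ob(1)] by (intro image_mset_cong) auto
      ultimately show "ic_partition (snd c) (fst c) m"
        unfolding ic_partition_def using Ob kO_def by auto
    qed
  qed
qed



theorem mainTheorem18:
  fixes n :: nat and G :: "(nat \<Rightarrow> nat) set" and g1 g2 :: "nat \<Rightarrow> nat"
  assumes "subgroup G (sym_group n)"
    and "transitive_perm_group n G"
    and "g1 \<in> G" and "g2 \<in> G"
    and "i_type n g1 \<inter> i_type n g2 = {}"
  shows "primitive_perm_group n G"
proof -
  note sg = assms(1)
  have perm: "\<And>h. h \<in> G \<Longrightarrow> h permutes {1..n}"
    using subgroup.subset[OF sg] sym_group_carrier by blast
  have compG: "\<And>h1 h2. h1 \<in> G \<Longrightarrow> h2 \<in> G \<Longrightarrow> h1 \<circ> h2 \<in> G"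
    using subgroup.m_closed[OF sg] by (simp add: sym_group_mult)
  have invG: "\<And>h. h \<in> G \<Longrightarrow> inv' h \<in> G"
  proof -
    fix h assume h: "h \<in> G"
    have "inv\<^bsub>sym_group n\<^esub> h \<in> G" by (rule subgroup.m_inv_closed[OF sg h])
    moreover have "h \<in> carrier (sym_group n)" using h subgroup.subset[OF sg] by blast
    ultimately show "inv' h \<in> G" by simp
  qed
  show ?thesis unfolding primitive_perm_group_def
  proof (intro conjI allI impI)
    show "transitive_perm_group n G" by (rule assms(2))
    fix B assume blk: "is_block n G B"
    show "card B = 1 \<or> B = {1..n}"
    proof (rule ccontr)
      assume nt: "\<not> (card B = 1 \<or> B = {1..n})"
      have Bne: "B \<noteq> {}" and Bsub: "B \<subseteq> {1..n}"
        and Bblk: "\<And>g. g \<in> G \<Longrightarrow> g ` B = B \<or> g ` B \<inter> B = {}"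
        using blk unfolding is_block_def by auto
      define m where "m = card B"
      have finB: "finite B" using Bsub finite_subset by auto
      have m1: "m > 1" using nt Bne finB m_def
        by (metis card_0_eq less_one linorder_neqE_nat)
      have mn: "m < n"
      proof -
        have "B \<subset> {1..n}" using Bsub nt by auto
        hence "card B < card {1..n}" by (intro psubset_card_mono) auto
        thus ?thesis using m_def by simp
      qed
      define Bs where "Bs = (\<lambda>h. h ` B) ` G"
      have Bs_sub: "\<And>X. X \<in> Bs \<Longrightarrow> X \<subseteq> {1..n}"
      proof -
        fix X assume "X \<in> Bs"
        then obtain h where h: "h \<in> G" "X = h ` B" unfolding Bs_def by auto
        show "X \<subseteq> {1..n}" using h permutes_image[OF perm[OF h(1)]] Bsub by auto
      qed
      have finBs: "finite Bs"
      proof -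
        have "Bs \<subseteq> Pow {1..n}" using Bs_sub by auto
        thus ?thesis by (rule finite_subset) simp
      qed
      have cov: "\<Union>Bs = {1..n}"
      proof
        show "\<Union>Bs \<subseteq> {1..n}" using Bs_sub by auto
        show "{1..n} \<subseteq> \<Union>Bs"
        proof
          fix y assume y: "y \<in> {1..n}"
          obtain x where x: "x \<in> B" using Bne by auto
          hence "x \<in> {1..n}" using Bsub by auto
          then obtain h where h: "h \<in> G" "h x = y" using assms(2) y
            unfolding transitive_perm_group_def by blast
          hence "y \<in> h ` B" using x by auto
          moreover have "h ` B \<in> Bs" unfolding Bs_def using h(1) by auto
          ultimately show "y \<in> \<Union>Bs" by auto
        qed
      qed
      have cardB: "\<And>X. X \<in> Bs \<Longrightarrow> card X = m"
      proof -
        fix X assume "X \<in> Bs"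
        then obtain h where h: "h \<in> G" "X = h ` B" unfolding Bs_def by auto
        have "inj h" using perm[OF h(1)] permutes_inj by blast
        thus "card X = m" using h(2) m_def by (simp add: card_image inj_on_subset)
      qed
      have disj: "\<And>X Y. X \<in> Bs \<Longrightarrow> Y \<in> Bs \<Longrightarrow> X \<inter> Y \<noteq> {} \<Longrightarrow> X = Y"
      proof -
        fix X Y assume X: "X \<in> Bs" and Y: "Y \<in> Bs" and XY: "X \<inter> Y \<noteq> {}"
        obtain h1 where h1: "h1 \<in> G" "X = h1 ` B" using X unfolding Bs_def by auto
        obtain h2 where h2: "h2 \<in> G" "Y = h2 ` B" using Y unfolding Bs_def by auto
        obtain a b where ab: "a \<in> B" "b \<in> B" "h1 a = h2 b" using XY h1 h2 by auto
        define u where "u = inv' h1 \<circ> h2"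
        have uG: "u \<in> G" unfolding u_def using compG invG h1 h2 by auto
        have p1: "h1 permutes {1..n}" by (rule perm[OF h1(1)])
        have "u b = a" unfolding u_def using ab(3) permutes_inverses(2)[OF p1, of a] by simp
        hence "a \<in> u ` B \<inter> B" using ab by auto
        hence uB: "u ` B = B" using Bblk[OF uG] by auto
        have "h1 ` (u ` B) = h2 ` B" unfolding u_def image_image
          using permutes_inverses(1)[OF p1] by simp
        thus "X = Y" using uB h1 h2 by simp
      qed
      have invB: "\<And>g X. g \<in> G \<Longrightarrow> X \<in> Bs \<Longrightarrow> g ` X \<in> Bs"
      proof -
        fix g X assume g: "g \<in> G" and "X \<in> Bs"
        then obtain h where h: "h \<in> G" "X = h ` B" unfolding Bs_def by auto
        have "g ` X = (g \<circ> h) ` B" using h(2) by (simp add: image_comp)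
        moreover have "(g \<circ> h) ` B \<in> Bs" unfolding Bs_def by (rule imageI[OF compG[OF g h(1)]])
        ultimately show "g ` X \<in> Bs" by simp
      qed
      define k where "k = card Bs"
      have nkm: "n = k * m"
      proof -
        have pd: "pairwise disjnt Bs"
        proof (rule pairwiseI)
          fix X Y assume "X \<in> Bs" "Y \<in> Bs" "X \<noteq> Y"
          thus "disjnt X Y" using disj[of X Y] by (auto simp: disjnt_def)
        qed
        have "card (\<Union>Bs) = sum card Bs"
          by (rule card_Union_disjoint[OF pd]) (meson Bs_sub finite_subset finite_atLeastAtMost)
        also have "\<dots> = sum (\<lambda>_. m) Bs" using cardB by (intro sum.cong) auto
        finally show ?thesis using cov k_def by simp
      qed
      have k1: "k > 1"
      proof (rule ccontr)
        assume "\<not> k > 1"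
        hence "k \<le> 1" by simp
        hence "k * m \<le> m" by simp
        thus False using nkm mn by simp
      qed
      have ip: "\<And>g. g \<in> G \<Longrightarrow> (k, m) \<in> i_type n g"
      proof -
        fix g assume g: "g \<in> G"
        have "i_partition (cycle_partition n g) k m"
          by (rule core[OF perm[OF g] finBs cov cardB _ disj invB[OF g] nkm k_def[symmetric]])
             (use m1 in auto)
        thus "(k, m) \<in> i_type n g" unfolding i_type_def using k1 m1 nkm by auto
      qed
      show False using ip[OF assms(3)] ip[OF assms(4)] assms(5) by auto
    qed
  qed
qed

end
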